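(* Let $T$ be a complete theory and $\varphi(x;y)$ a formula whose characteristic sequence $\langle P_n\rangle$ has an $(\omega,2)$-array. Then $\alpha(n)\geq\lfloor n/2\rfloor$ for all $n$.
   Context: The characteristic sequence: $P_n(y_1,\dots,y_n):=\exists x\bigwedge_{i\le n}\varphi(x;y_i)$, interpreted in a sufficiently saturated model of $T$; standing assumption $T\vdash\forall y\exists z\forall x(\varphi(x;z)\leftrightarrow\neg\varphi(x;y))$. An $(\omega,2)$-array is $\langle a^t_i:t<2,i<\omega\rangle\subseteq P_1$ such that for all $n<\omega$, $P_n(a^{t_1}_{i_1},\dots,a^{t_n}_{i_n})$ holds iff for all $j,\ell\le n$, $i_j=i_\ell$ implies $t_j=t_\ell$. For finite $X\subseteq P_1$, $\hat e(X)$ is the number of unordered pairs of distinct $x,y\in X$ with $\neg P_2(x,y)$, and $\alpha(n)=\max\{\hat e(X):X\subseteq P_1,|X|=n\}$. *)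

theory Defs
  imports Main
begin

text \<open>A formula phi(x;y) interpreted in a (sufficiently saturated) model: x ranges over
  type 'x, y over type 'y (tuples allowed via product types).\<close>

definition charP :: "('x \<Rightarrow> 'y \<Rightarrow> bool) \<Rightarrow> 'y list \<Rightarrow> bool" where
  "charP \<phi> ys \<longleftrightarrow> (\<exists>x. \<forall>y\<in>set ys. \<phi> x y)"

definition P1 :: "('x \<Rightarrow> 'y \<Rightarrow> bool) \<Rightarrow> 'y set" where
  "P1 \<phi> = {y. charP \<phi> [y]}"

definition P2 :: "('x \<Rightarrow> 'y \<Rightarrow> bool) \<Rightarrow> 'y \<Rightarrow> 'y \<Rightarrow> bool" where
  "P2 \<phi> y z \<longleftrightarrow> charP \<phi> [y, z]"

definition omega2_array :: "('x \<Rightarrow> 'y \<Rightarrow> bool) \<Rightarrow> (nat \<Rightarrow> nat \<Rightarrow> 'y) \<Rightarrow> bool" where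
  "omega2_array \<phi> a \<longleftrightarrow>
     (\<forall>t<2. \<forall>i. a t i \<in> P1 \<phi>) \<and>
     (\<forall>ps :: (nat \<times> nat) list. (\<forall>(t, i)\<in>set ps. t < 2) \<longrightarrow>
        (charP \<phi> (map (\<lambda>(t, i). a t i) ps) \<longleftrightarrow>
         (\<forall>(t, i)\<in>set ps. \<forall>(s, j)\<in>set ps. i = j \<longrightarrow> t = s)))"

definition e_hat :: "('x \<Rightarrow> 'y \<Rightarrow> bool) \<Rightarrow> 'y set \<Rightarrow> nat" where
  "e_hat \<phi> X = card {{x, y} | x y. x \<in> X \<and> y \<in> X \<and> x \<noteq> y \<and> \<not> P2 \<phi> x y}"

definition alpha :: "('x \<Rightarrow> 'y \<Rightarrow> bool) \<Rightarrow> nat \<Rightarrow> nat" where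
  "alpha \<phi> n = Max {e_hat \<phi> X | X. X \<subseteq> P1 \<phi> \<and> finite X \<and> card X = n}"

end

theory Submission
  imports Defs
begin

lemma arr2:
  assumes arr: "omega2_array \<phi> a" and "t < 2" "s < 2"
  shows "charP \<phi> [a t i, a s j] \<longleftrightarrow> (i = j \<longrightarrow> t = s)"
proof -
  have "charP \<phi> (map (\<lambda>(t, i). a t i) [(t,i),(s,j)]) \<longleftrightarrow>
         (\<forall>(t', i')\<in>set [(t,i),(s,j)]. \<forall>(s', j')\<in>set [(t,i),(s,j)]. i' = j' \<longrightarrow> t' = s')"
  proof -
    have "\<forall>ps :: (nat \<times> nat) list. (\<forall>(t, i)\<in>set ps. t < 2) \<longrightarrow>
        (charP \<phi> (map (\<lambda>(t, i). a t i) ps) \<longleftrightarrow>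
         (\<forall>(t, i)\<in>set ps. \<forall>(s, j)\<in>set ps. i = j \<longrightarrow> t = s))"
      using arr unfolding omega2_array_def by blast
    from spec[OF this, of "[(t,i),(s,j)]"] show ?thesis using assms(2,3) by simp
  qed
  then show ?thesis by auto
qed

lemma arr1:
  assumes arr: "omega2_array \<phi> a" and "t < 2"
  shows "charP \<phi> [a t i]"
  using arr assms unfolding omega2_array_def P1_def by auto

lemma e_hat_bound:
  assumes "finite X"
  shows "e_hat \<phi> X \<le> 2 ^ card X"
proof -
  have "{{x, y} | x y. x \<in> X \<and> y \<in> X \<and> x \<noteq> y \<and> \<not> P2 \<phi> x y} \<subseteq> Pow X" by auto
  then have "e_hat \<phi> X \<le> card (Pow X)" unfolding e_hat_def
    using assms by (intro card_mono) auto
  then show ?thesis using assms by (simp add: card_Pow)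
qed

theorem mainTheorem10:
  fixes \<phi> :: "'x \<Rightarrow> 'y \<Rightarrow> bool" and a :: "nat \<Rightarrow> nat \<Rightarrow> 'y"
  assumes neg: "\<forall>y. \<exists>z. \<forall>x. \<phi> x z \<longleftrightarrow> \<not> \<phi> x y"
    and arr: "omega2_array \<phi> a"
  shows "\<forall>n. alpha \<phi> n \<ge> n div 2"
proof
  fix n :: nat
  define k where "k = n div 2"
  have c: "charP \<phi> [a t i, a s j] \<longleftrightarrow> (i = j \<longrightarrow> t = s)" if "t < 2" "s < 2" for t s i j
    using arr2[OF arr that] .
  have c1: "charP \<phi> [a t i]" if "t < 2" for t i using arr1[OF arr that] .
  have dup: "charP \<phi> [y, y] \<longleftrightarrow> charP \<phi> [y]" for y unfolding charP_def by auto
  have inj0: "inj (a 0)"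
  proof (rule injI)
    fix i j assume h: "a 0 i = a 0 j"
    show "i = j"
    proof (rule ccontr)
      assume "i \<noteq> j"
      then have "charP \<phi> [a 0 i, a 1 j]" using c[of 0 1 i j] by simp
      moreover have "\<not> charP \<phi> [a 0 j, a 1 j]" using c[of 0 1 j j] by simp
      ultimately show False using h by simp
    qed
  qed
  have inj1: "inj (a 1)"
  proof (rule injI)
    fix i j assume h: "a 1 i = a 1 j"
    show "i = j"
    proof (rule ccontr)
      assume "i \<noteq> j"
      then have "charP \<phi> [a 0 j, a 1 i]" using c[of 0 1 j i] by simp
      moreover have "\<not> charP \<phi> [a 0 j, a 1 j]" using c[of 0 1 j j] by simp
      ultimately show False using h by simp
    qed
  qed
  have disj: "a 0 i \<noteq> a 1 j" for i j
  proof
    assume h: "a 0 i = a 1 j"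
    show False
    proof (cases "i = j")
      case True
      then show False using c[of 0 1 i i] c1[of 0 i] h dup by simp
    next
      case False
      have "\<not> charP \<phi> [a 0 i, a 1 i]" using c[of 0 1 i i] by simp
      moreover have "charP \<phi> [a 1 j, a 1 i]" using c[of 1 1 j i] by simp
      ultimately show False using h by simp
    qed
  qed
  define X where "X = a 0 ` {..<n-k} \<union> a 1 ` {..<k}"
  have fX: "finite X" unfolding X_def by auto
  have cX: "card X = n"
  proof -
    have "card X = card (a 0 ` {..<n-k}) + card (a 1 ` {..<k})"
      unfolding X_def using disj by (intro card_Un_disjoint) auto
    also have "\<dots> = (n-k) + k"
      using inj0 inj1 by (simp add: card_image inj_on_subset)
    finally show ?thesis unfolding k_def by simp
  qed
  have PX: "X \<subseteq> P1 \<phi>" unfolding X_def P1_def using c1 by auto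
  have "k \<le> e_hat \<phi> X"
  proof -
    let ?E = "{{x, y} | x y. x \<in> X \<and> y \<in> X \<and> x \<noteq> y \<and> \<not> P2 \<phi> x y}"
    have "?E \<subseteq> Pow X" by auto
    then have fE: "finite ?E" using fX by (meson finite_Pow_iff finite_subset)
    have sub: "(\<lambda>i. {a 0 i, a 1 i}) ` {..<k} \<subseteq> ?E"
    proof
      fix S assume "S \<in> (\<lambda>i. {a 0 i, a 1 i}) ` {..<k}"
      then obtain i where i: "i < k" "S = {a 0 i, a 1 i}" by auto
      have "i < n - k" using i(1) unfolding k_def by simp
      then have "a 0 i \<in> X" "a 1 i \<in> X" using i(1) unfolding X_def by auto
      moreover have "\<not> P2 \<phi> (a 0 i) (a 1 i)" unfolding P2_def using c[of 0 1 i i] by simp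
      ultimately show "S \<in> ?E" using i(2) disj by blast
    qed
    have injp: "inj_on (\<lambda>i. {a 0 i, a 1 i}) {..<k}"
    proof (rule inj_onI)
      fix i j assume "{a 0 i, a 1 i} = {a 0 j, a 1 j}"
      then have "a 0 i = a 0 j" using disj by (auto simp: doubleton_eq_iff)
      then show "i = j" using inj0 by (simp add: inj_eq)
    qed
    have "k = card ((\<lambda>i. {a 0 i, a 1 i}) ` {..<k})" using injp by (simp add: card_image)
    also have "\<dots> \<le> card ?E" using card_mono[OF fE sub] .
    finally show ?thesis unfolding e_hat_def .
  qed
  let ?S = "{e_hat \<phi> X | X. X \<subseteq> P1 \<phi> \<and> finite X \<and> card X = n}"
  have "?S \<subseteq> {..2^n}" using e_hat_bound by fastforce
  then have fS: "finite ?S" by (rule finite_subset) auto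
  have "e_hat \<phi> X \<in> ?S" using PX fX cX by blast
  then have "e_hat \<phi> X \<le> alpha \<phi> n" unfolding alpha_def using fS by (simp add: Max_ge)
  then show "n div 2 \<le> alpha \<phi> n" using \<open>k \<le> e_hat \<phi> X\<close> k_def by simp
qed

end
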